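(* For any $x\in(H^\ast)^{\otimes n}$ and $v\in H^{\otimes n}$, $[\mathcal{B}_n(x)](v)=x(\mathcal{B}_n(v))$.
   Context: $G$ finite group, $H$ a finite dimensional $G$-graded $G$-module, $H^\ast$ its dual with $(\gamma\cdot x)(v)=x(\gamma^{-1}\cdot v)$ and $(H^\ast)_m=(H_{m^{-1}})^\ast$; $B_n$ acts on $H^{\otimes n}$ and $(H^\ast)^{\otimes n}$ via the braiding $v\otimes w\mapsto(g\cdot w)\otimes v$ for $v$ of degree $g$. The pairing is $(x_1\otimes\cdots\otimes x_n)(v_1\otimes\cdots\otimes v_n)=x_n(v_1)\cdots x_1(v_n)$. $\mathcal{B}_n$ is the $n$th braidization (on $H^{\otimes n}$ and on $(H^\ast)^{\otimes n}$): for $\boldsymbol\gamma\in G^n$ and $v$ in $H_{\gamma_1}\otimes\cdots\otimes H_{\gamma_n}$, $\mathcal{B}_n(v)=\frac{1}{|A_{\boldsymbol\gamma}|}\sum_{b_{\boldsymbol\gamma}\in A_{\boldsymbol\gamma}}b_{\boldsymbol\gamma}\cdot v$, where $A_{\boldsymbol\gamma}$ is the set of distinct transformations $b_{\boldsymbol\gamma}\in G^n\rtimes S_n$ induced by braids $b\in B_n$ acting on $\boldsymbol\gamma$ (under $b_i(\gamma_1,\dots,\gamma_n)=(\dots,\gamma_i\gamma_{i+1}\gamma_i^{-1},\gamma_i,\dots)$), i.e. morphisms with source $\boldsymbol\gamma$ in the groupoid $\mathcal G^n$. *)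

theory Defs
  imports "HOL-Algebra.Group"
begin

text \<open>The finite-dimensional G-graded G-module H over a field 'k is
given by a homogeneous basis indexed by the finite type 'i: basis vector e_i has degree
deg i, and g acts by the matrix rho g, where rho g i j is the coefficient of e_i in g.e_j.
A tensor in the n-th tensor power is a coefficient function on index lists of length n.\<close>

definition graded_module ::
  "('g, 'b) monoid_scheme \<Rightarrow> ('i::finite \<Rightarrow> 'g) \<Rightarrow> ('g \<Rightarrow> 'i \<Rightarrow> 'i \<Rightarrow> 'k::field) \<Rightarrow> bool" where
  "graded_module G deg rho \<longleftrightarrow>
     (\<forall>i. deg i \<in> carrier G) \<and>
     (\<forall>i j. rho \<one>\<^bsub>G\<^esub> i j = (if i = j then 1 else 0)) \<and>
     (\<forall>g\<in>carrier G. \<forall>h\<in>carrier G. \<forall>i j.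
        rho (g \<otimes>\<^bsub>G\<^esub> h) i j = (\<Sum>k\<in>UNIV. rho g i k * rho h k j)) \<and>
     (\<forall>g\<in>carrier G. \<forall>i j. rho g i j \<noteq> 0 \<longrightarrow>
        deg i = g \<otimes>\<^bsub>G\<^esub> deg j \<otimes>\<^bsub>G\<^esub> inv\<^bsub>G\<^esub> g)"

text \<open>Dual module H*: dual basis e^i has degree (deg i)^-1, since (H*)_m = (H_{m^-1})^*,
and (g.x)(v) = x(g^-1.v) gives coefficient of e^j in g.e^i equal to rho (g^-1) i j.\<close>

definition dual_deg :: "('g, 'b) monoid_scheme \<Rightarrow> ('i \<Rightarrow> 'g) \<Rightarrow> 'i \<Rightarrow> 'g" where
  "dual_deg G deg i = inv\<^bsub>G\<^esub> (deg i)"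

definition dual_rep :: "('g, 'b) monoid_scheme \<Rightarrow> ('g \<Rightarrow> 'i \<Rightarrow> 'i \<Rightarrow> 'k) \<Rightarrow> 'g \<Rightarrow> 'i \<Rightarrow> 'i \<Rightarrow> 'k" where
  "dual_rep G rho g j i = rho (inv\<^bsub>G\<^esub> g) i j"

text \<open>Transformations in G^n \<rtimes> S_n: a pair (h, p) of lists of length n acts on a pure
tensor v_0 \<otimes> ... \<otimes> v_{n-1} by producing the tensor whose j-th factor is h!j . v_{p!j}.
A state records also the current degree sequence. Braid generator sigma_i (True) sends
(v_i of degree a) \<otimes> (v_{i+1} of degree b) to (a.v_{i+1}) \<otimes> v_i, with new degrees (a b a^-1, a);
its inverse (False) sends it to v_{i+1} \<otimes> (b^-1.v_i), with new degrees (b, b^-1 a b).\<close>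

definition braid_step ::
  "('g, 'b) monoid_scheme \<Rightarrow> nat \<times> bool \<Rightarrow> 'g list \<times> 'g list \<times> nat list \<Rightarrow> 'g list \<times> 'g list \<times> nat list" where
  "braid_step G s st = (case st of (\<gamma>, h, p) \<Rightarrow> (case s of (i, pos) \<Rightarrow>
     if pos then
       (\<gamma>[i := \<gamma>!i \<otimes>\<^bsub>G\<^esub> \<gamma>!(Suc i) \<otimes>\<^bsub>G\<^esub> inv\<^bsub>G\<^esub> (\<gamma>!i), Suc i := \<gamma>!i],
        h[i := \<gamma>!i \<otimes>\<^bsub>G\<^esub> h!(Suc i), Suc i := h!i],
        p[i := p!(Suc i), Suc i := p!i])
     else
       (\<gamma>[i := \<gamma>!(Suc i), Suc i := inv\<^bsub>G\<^esub> (\<gamma>!(Suc i)) \<otimes>\<^bsub>G\<^esub> \<gamma>!i \<otimes>\<^bsub>G\<^esub> \<gamma>!(Suc i)],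
        h[i := h!(Suc i), Suc i := inv\<^bsub>G\<^esub> (\<gamma>!(Suc i)) \<otimes>\<^bsub>G\<^esub> h!i],
        p[i := p!(Suc i), Suc i := p!i])))"

definition braid_word_apply ::
  "('g, 'b) monoid_scheme \<Rightarrow> (nat \<times> bool) list \<Rightarrow> 'g list \<Rightarrow> 'g list \<times> 'g list \<times> nat list" where
  "braid_word_apply G w \<gamma> = fold (braid_step G) w (\<gamma>, replicate (length \<gamma>) \<one>\<^bsub>G\<^esub>, [0..<length \<gamma>])"

definition braid_transf :: "('g, 'b) monoid_scheme \<Rightarrow> 'g list \<Rightarrow> ('g list \<times> nat list) set" where
  "braid_transf G \<gamma> = {snd (braid_word_apply G w \<gamma>) | w. \<forall>s\<in>set w. Suc (fst s) < length \<gamma>}"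

definition tuples :: "nat \<Rightarrow> 'i list set" where
  "tuples n = {xs. length xs = n}"

definition braidization ::
  "('g, 'b) monoid_scheme \<Rightarrow> ('i::finite \<Rightarrow> 'g) \<Rightarrow> ('g \<Rightarrow> 'i \<Rightarrow> 'i \<Rightarrow> 'k::field) \<Rightarrow> nat
     \<Rightarrow> ('i list \<Rightarrow> 'k) \<Rightarrow> ('i list \<Rightarrow> 'k)" where
  "braidization G deg rho n T = (\<lambda>js. if length js = n then
      (\<Sum>is\<in>tuples n. T is *
         (1 / of_nat (card (braid_transf G (map deg is)))) *
         (\<Sum>(h, p)\<in>braid_transf G (map deg is). \<Prod>j<n. rho (h!j) (js!j) (is!(p!j))))
     else 0)"

text \<open>Pairing (x_1 \<otimes> ... \<otimes> x_n)(v_1 \<otimes> ... \<otimes> v_n) = x_n(v_1) ... x_1(v_n), extended bilinearly;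
dual basis: e^j(e_i) = [i = j].\<close>
definition pairing :: "nat \<Rightarrow> ('i list \<Rightarrow> 'k::field) \<Rightarrow> ('i list \<Rightarrow> 'k) \<Rightarrow> 'k" where
  "pairing n X T = (\<Sum>js\<in>tuples n. \<Sum>is\<in>tuples n. X js * T is *
      (\<Prod>k<n. if js!(n - 1 - k) = is!k then 1 else 0))"

end

theory Submission
  imports Defs
begin


definition Wf :: "('g,'b) monoid_scheme \<Rightarrow> nat \<Rightarrow> 'g list \<times> 'g list \<times> nat list \<Rightarrow> bool" where
  "Wf G n s = (case s of (\<gamma>,h,p) \<Rightarrow> length \<gamma> = n \<and> length h = n \<and> length p = n \<and>
     (\<forall>j<n. \<gamma>!j \<in> carrier G) \<and> (\<forall>j<n. h!j \<in> carrier G) \<and> (\<forall>j<n. p!j < n) \<and> distinct p)"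

definition cmp :: "('g,'b) monoid_scheme \<Rightarrow> nat \<Rightarrow> 'g list \<times> 'g list \<times> nat list \<Rightarrow> 'g list \<times> nat list \<Rightarrow> 'g list \<times> 'g list \<times> nat list" where
  "cmp G n s f = (case s of (\<gamma>,h2,p2) \<Rightarrow> case f of (h,p) \<Rightarrow>
     (\<gamma>, map (\<lambda>j. h2!j \<otimes>\<^bsub>G\<^esub> h!(p2!j)) [0..<n], map (\<lambda>j. p!(p2!j)) [0..<n]))"

definition Dm :: "('g,'b) monoid_scheme \<Rightarrow> nat \<Rightarrow> 'g list \<times> 'g list \<times> nat list \<Rightarrow> 'g list \<times> 'g list \<times> nat list" where
  "Dm G n s = (case s of (\<gamma>,h,p) \<Rightarrow> (rev (map (\<lambda>a. inv\<^bsub>G\<^esub> a) \<gamma>), rev h, rev (map (\<lambda>k. n - 1 - k) p)))"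

context group begin

lemma gl1[simp]: "x \<in> carrier G \<Longrightarrow> y \<in> carrier G \<Longrightarrow> inv x \<otimes> (x \<otimes> y) = y"
  by (simp add: m_assoc[symmetric])
lemma gl2[simp]: "x \<in> carrier G \<Longrightarrow> y \<in> carrier G \<Longrightarrow> x \<otimes> (inv x \<otimes> y) = y"
  by (simp add: m_assoc[symmetric])

lemma step_Wf:
  assumes "Wf G n s" "Suc i < n"
  shows "Wf G n (braid_step G (i,b) s)"
  using assms unfolding Wf_def braid_step_def
  by (cases s) (auto simp: nth_list_update)

lemma step_cmp:
  assumes "Wf G n s" "Suc i < n" "length h = n" "\<forall>j<n. h!j \<in> carrier G"
  shows "braid_step G (i,b) (cmp G n s (h,p)) = cmp G n (braid_step G (i,b) s) (h,p)"
  using assms unfolding Wf_def braid_step_def cmp_def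
  by (cases s) (auto intro!: nth_equalityI simp: nth_list_update m_assoc)

lemma step_inv:
  assumes "Wf G n s" "Suc i < n"
  shows "braid_step G (i, \<not>b) (braid_step G (i,b) s) = s"
  using assms unfolding Wf_def braid_step_def
  by (cases s) (auto intro!: nth_equalityI simp: nth_list_update m_assoc inv_mult_group)


lemma step_Dm:
  assumes "Wf G n s" "Suc i < n"
  shows "braid_step G (n - 2 - i, \<not>b) (Dm G n s) = Dm G n (braid_step G (i,b) s)"
proof -
  obtain \<gamma> h p where s: "s = (\<gamma>,h,p)" by (cases s)
  have m: "Suc (n - 2 - i) = n - 1 - i" "n - 2 - i < n" "n - Suc (n - 2 - i) = Suc i" "n - Suc (n - Suc (Suc i)) = Suc i"
     "n - Suc (n - Suc i) = i" using assms(2) by auto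
  show ?thesis using assms m unfolding Wf_def braid_step_def Dm_def s
    by (auto intro!: nth_equalityI simp: nth_list_update rev_nth m_assoc inv_mult_group)
qed

end



definition st0 :: "('g,'b) monoid_scheme \<Rightarrow> 'g list \<Rightarrow> 'g list \<times> 'g list \<times> nat list" where
  "st0 G \<gamma> = (\<gamma>, replicate (length \<gamma>) \<one>\<^bsub>G\<^esub>, [0..<length \<gamma>])"

definition valid :: "nat \<Rightarrow> (nat \<times> bool) list \<Rightarrow> bool" where
  "valid n w = (\<forall>s\<in>set w. Suc (fst s) < n)"

definition SS :: "('g,'b) monoid_scheme \<Rightarrow> 'g list \<Rightarrow> ('g list \<times> 'g list \<times> nat list) set" where
  "SS G \<gamma> = {fold (braid_step G) w (st0 G \<gamma>) | w. valid (length \<gamma>) w}"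

definition invw :: "(nat \<times> bool) list \<Rightarrow> (nat \<times> bool) list" where
  "invw w = rev (map (\<lambda>(i,b). (i, \<not>b)) w)"

definition mw :: "nat \<Rightarrow> (nat \<times> bool) list \<Rightarrow> (nat \<times> bool) list" where
  "mw n w = map (\<lambda>(i,b). (n - 2 - i, \<not>b)) w"

lemma braid_transf_SS: "braid_transf G \<gamma> = snd ` SS G \<gamma>"
  unfolding braid_transf_def SS_def valid_def braid_word_apply_def st0_def by auto

lemma valid_append[simp]: "valid n (a @ b) = (valid n a \<and> valid n b)"
  by (auto simp: valid_def)
lemma valid_invw[simp]: "valid n (invw w) = valid n w"
  by (auto simp: valid_def invw_def)
lemma invw_invw[simp]: "invw (invw w) = w"
  by (induct w) (auto simp: invw_def)
lemma valid_mw: "valid n w \<Longrightarrow> valid n (mw n w)"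
  by (auto simp: valid_def mw_def)

context group begin

lemma Wf_st0: "\<forall>j<length \<gamma>. \<gamma>!j \<in> carrier G \<Longrightarrow> Wf G (length \<gamma>) (st0 G \<gamma>)"
  unfolding Wf_def st0_def by auto

lemma fold_Wf: "Wf G n s \<Longrightarrow> valid n w \<Longrightarrow> Wf G n (fold (braid_step G) w s)"
proof (induct w arbitrary: s)
  case (Cons a w)
  obtain i b where a: "a = (i,b)" by (cases a)
  have i: "Suc i < n" using Cons a by (auto simp: valid_def)
  show ?case using Cons(1)[OF step_Wf[OF Cons(2) i]] Cons(3) a by (auto simp: valid_def)
qed simp

lemma fold_cmp: "Wf G n s \<Longrightarrow> valid n w \<Longrightarrow> length h = n \<Longrightarrow> \<forall>j<n. h!j \<in> carrier G \<Longrightarrow>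
   fold (braid_step G) w (cmp G n s (h,p)) = cmp G n (fold (braid_step G) w s) (h,p)"
proof (induct w arbitrary: s)
  case (Cons a w)
  obtain i b where a: "a = (i,b)" by (cases a)
  have "Suc i < n" using Cons a by (auto simp: valid_def)
  then show ?case using Cons a step_cmp step_Wf by (auto simp: valid_def)
qed simp

lemma fold_inv: "Wf G n s \<Longrightarrow> valid n w \<Longrightarrow> fold (braid_step G) (invw w) (fold (braid_step G) w s) = s"
proof (induct w arbitrary: s)
  case (Cons a w)
  obtain i b where a: "a = (i,b)" by (cases a)
  have i: "Suc i < n" using Cons a by (auto simp: valid_def)
  have "fold (braid_step G) (invw w) (fold (braid_step G) w (braid_step G (i,b) s)) = braid_step G (i,b) s"
    using Cons i step_Wf by (auto simp: valid_def)
  then show ?case using a step_inv[OF Cons(2) i] by (simp add: invw_def)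
qed (simp add: invw_def)

lemma fold_Dm: "Wf G n s \<Longrightarrow> valid n w \<Longrightarrow>
   fold (braid_step G) (mw n w) (Dm G n s) = Dm G n (fold (braid_step G) w s)"
proof (induct w arbitrary: s)
  case (Cons a w)
  obtain i b where a: "a = (i,b)" by (cases a)
  have i: "Suc i < n" using Cons a by (auto simp: valid_def)
  show ?case using Cons(1)[of "braid_step G (i,b) s"] Cons(3) step_Wf[OF Cons(2) i] step_Dm[OF Cons(2) i] a
    by (auto simp: mw_def valid_def)
qed (simp add: mw_def)

lemma Dm_st0: "Dm G (length \<gamma>) (st0 G \<gamma>) = st0 G (rev (map (\<lambda>a. inv a) \<gamma>))"
  unfolding Dm_def st0_def by (auto intro!: nth_equalityI simp: rev_nth)

lemma Dm_Dm: "Wf G n s \<Longrightarrow> Dm G n (Dm G n s) = s"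
  unfolding Dm_def Wf_def by (cases s) (auto intro!: nth_equalityI simp: rev_nth rev_map[symmetric])

lemma cmp_st0: "length \<gamma> = n \<Longrightarrow> length h = n \<Longrightarrow> length p = n \<Longrightarrow> \<forall>j<n. h!j \<in> carrier G \<Longrightarrow>
   cmp G n (st0 G \<gamma>) (h,p) = (\<gamma>,h,p)"
  unfolding cmp_def st0_def by (auto intro!: nth_equalityI)

lemma fst_cmp[simp]: "fst (cmp G n s f) = fst s"
  unfolding cmp_def by (auto split: prod.splits)

lemma cmp_cancel:
  assumes "Wf G n t" "Wf G n t'" "fst t = fst t'" "length p = n" "distinct p" "\<forall>j<n. h!j \<in> carrier G"
    "cmp G n t (h,p) = cmp G n t' (h,p)"
  shows "t = t'"
proof -
  obtain \<gamma> h2 p2 where t: "t = (\<gamma>,h2,p2)" by (cases t)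
  obtain \<gamma>' h2' p2' where t': "t' = (\<gamma>',h2',p2')" by (cases t')
  have eqs: "\<forall>j<n. h2!j \<otimes> h!(p2!j) = h2'!j \<otimes> h!(p2'!j) \<and> p!(p2!j) = p!(p2'!j)"
    using assms(7) unfolding t t' cmp_def by auto
  have "\<forall>j<n. p2!j = p2'!j"
    using eqs assms(1,2,4,5) unfolding t t' Wf_def by (auto simp: nth_eq_iff_index_eq)
  moreover have "\<forall>j<n. h2!j = h2'!j"
  proof (intro allI impI)
    fix j assume j: "j < n"
    have "p2!j < n" "p2'!j = p2!j" using assms(1) j \<open>\<forall>j<n. p2!j = p2'!j\<close> unfolding t Wf_def by auto
    then show "h2!j = h2'!j" using eqs j assms(1,2,6) unfolding t t' Wf_def by auto
  qed
  ultimately show ?thesis using assms(1,2,3) unfolding t t' Wf_def by (auto intro!: nth_equalityI)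
qed


end
definition Fm :: "('g,'b) monoid_scheme \<Rightarrow> 'g list \<Rightarrow> 'g list \<times> 'g list \<times> nat list \<Rightarrow> bool" where
  "Fm G \<gamma> s = (case s of (\<gamma>1,h,p) \<Rightarrow> \<forall>j<length \<gamma>. \<gamma>1!j = h!j \<otimes>\<^bsub>G\<^esub> \<gamma>!(p!j) \<otimes>\<^bsub>G\<^esub> inv\<^bsub>G\<^esub> (h!j))"
context group begin

lemma step_Fm:
  assumes W: "Wf G n s" and n: "length \<gamma> = n" and c: "\<forall>j<n. \<gamma>!j \<in> carrier G"
    and F: "Fm G \<gamma> s" and i: "Suc i < n"
  shows "Fm G \<gamma> (braid_step G (i,b) s)"
proof -
  obtain \<gamma>1 h p where s: "s = (\<gamma>1,h,p)" by (cases s)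
  have L: "length \<gamma>1 = n" "length h = n" "length p = n" and
    C: "\<forall>j<n. \<gamma>1!j \<in> carrier G" "\<forall>j<n. h!j \<in> carrier G" "\<forall>j<n. p!j < n"
    using W unfolding s Wf_def by auto
  have F': "\<And>j. j < n \<Longrightarrow> \<gamma>1!j = h!j \<otimes> \<gamma>!(p!j) \<otimes> inv (h!j)" using F n unfolding s Fm_def by auto
  have ci: "\<gamma>1!i \<in> carrier G" "\<gamma>1!Suc i \<in> carrier G" "h!i \<in> carrier G" "h!Suc i \<in> carrier G"
     "\<gamma>!(p!i) \<in> carrier G" "\<gamma>!(p!Suc i) \<in> carrier G" using C c i by auto
  have e1: "\<gamma>1!i \<otimes> \<gamma>1!Suc i \<otimes> inv (\<gamma>1!i) = (\<gamma>1!i \<otimes> h!Suc i) \<otimes> \<gamma>!(p!Suc i) \<otimes> inv (\<gamma>1!i \<otimes> h!Suc i)"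
    using ci F'[of "Suc i"] i by (simp add: m_assoc inv_mult_group)
  have e2: "inv (\<gamma>1!Suc i) \<otimes> \<gamma>1!i \<otimes> \<gamma>1!Suc i = (inv (\<gamma>1!Suc i) \<otimes> h!i) \<otimes> \<gamma>!(p!i) \<otimes> inv (inv (\<gamma>1!Suc i) \<otimes> h!i)"
    using ci F'[of i] i by (simp add: m_assoc inv_mult_group)
  show ?thesis unfolding s braid_step_def Fm_def using L F' i e1 e2
    by (auto simp: nth_list_update n)
qed

lemma fold_Fm: "Wf G n s \<Longrightarrow> length \<gamma> = n \<Longrightarrow> \<forall>j<n. \<gamma>!j \<in> carrier G \<Longrightarrow> Fm G \<gamma> s \<Longrightarrow> valid n w \<Longrightarrow>
    Fm G \<gamma> (fold (braid_step G) w s)"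
proof (induct w arbitrary: s)
  case (Cons a w)
  obtain i b where a: "a = (i,b)" by (cases a)
  have i: "Suc i < n" using Cons a by (auto simp: valid_def)
  show ?case using Cons(1)[OF step_Wf[OF Cons(2) i] Cons(3,4) step_Fm[OF Cons(2-5) i]] Cons(6) a
    by (auto simp: valid_def)
qed simp

lemma Fm_st0: "\<forall>j<length \<gamma>. \<gamma>!j \<in> carrier G \<Longrightarrow> Fm G \<gamma> (st0 G \<gamma>)"
  unfolding Fm_def st0_def by auto


abbreviation Cg :: "'a list \<Rightarrow> bool" where "Cg \<gamma> \<equiv> \<forall>j<length \<gamma>. \<gamma>!j \<in> carrier G"

lemma SS_props: "s \<in> SS G \<gamma> \<Longrightarrow> Cg \<gamma> \<Longrightarrow> Wf G (length \<gamma>) s \<and> Fm G \<gamma> s"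
  unfolding SS_def using fold_Wf Wf_st0 fold_Fm Fm_st0 by blast

lemma SS_fst: "s \<in> SS G \<gamma> \<Longrightarrow> Cg \<gamma> \<Longrightarrow> length (fst s) = length \<gamma> \<and> Cg (fst s)"
  using SS_props[of s \<gamma>] unfolding Wf_def by (auto split: prod.splits)

lemma SS_fold: "t \<in> SS G \<gamma> \<Longrightarrow> valid (length \<gamma>) v \<Longrightarrow> fold (braid_step G) v t \<in> SS G \<gamma>"
proof -
  assume t: "t \<in> SS G \<gamma>" and v: "valid (length \<gamma>) v"
  then obtain w where w: "valid (length \<gamma>) w" "t = fold (braid_step G) w (st0 G \<gamma>)" unfolding SS_def by auto
  show ?thesis unfolding SS_def using w v by (auto intro!: exI[of _ "w @ v"])
qed

lemma st0_SS: "st0 G \<gamma> \<in> SS G \<gamma>"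
  unfolding SS_def by (auto intro!: exI[of _ "[]"] simp: valid_def)

lemma inj_snd: "Cg \<gamma> \<Longrightarrow> inj_on snd (SS G \<gamma>)"
proof (rule inj_onI)
  fix s t assume s: "s \<in> SS G \<gamma>" and t: "t \<in> SS G \<gamma>" and "Cg \<gamma>" and e: "snd s = snd t"
  then have "Wf G (length \<gamma>) s \<and> Fm G \<gamma> s" "Wf G (length \<gamma>) t \<and> Fm G \<gamma> t" using SS_props by auto
  then show "s = t" using e unfolding Wf_def Fm_def by (cases s; cases t) (auto intro!: nth_equalityI)
qed

lemma finite_SS: assumes "finite (carrier G)" "Cg \<gamma>" shows "finite (SS G \<gamma>)"
proof -
  let ?n = "length \<gamma>"
  let ?A = "{xs. set xs \<subseteq> carrier G \<and> length xs = ?n}"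
  let ?B = "{xs. set xs \<subseteq> {..<?n} \<and> length xs = ?n}"
  have "SS G \<gamma> \<subseteq> ?A \<times> ?A \<times> ?B"
  proof
    fix s assume "s \<in> SS G \<gamma>"
    then have W: "Wf G ?n s" using SS_props assms by auto
    obtain a b c where s: "s = (a,b,c)" by (cases s)
    have "set a \<subseteq> carrier G" "set b \<subseteq> carrier G" "set c \<subseteq> {..<?n}"
      using W unfolding s Wf_def by (auto simp: in_set_conv_nth)
    then show "s \<in> ?A \<times> ?A \<times> ?B" using W unfolding s Wf_def by simp
  qed
  moreover have "finite (?A \<times> ?A \<times> ?B)"
    by (intro finite_cartesian_product finite_lists_length_eq assms(1) finite_lessThan)
  ultimately show ?thesis by (rule finite_subset)
qed

lemma inv_ex:
  assumes s: "s \<in> SS G \<gamma>" and c: "Cg \<gamma>"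
  shows "\<exists>t\<in>SS G (fst s). cmp G (length \<gamma>) t (snd s) = st0 G \<gamma> \<and> cmp G (length \<gamma>) s (snd t) = st0 G (fst s)"
proof -
  let ?n = "length \<gamma>"
  obtain w where w: "valid ?n w" "s = fold (braid_step G) w (st0 G \<gamma>)" using s unfolding SS_def by auto
  obtain \<gamma>1 h p where sp: "s = (\<gamma>1,h,p)" by (cases s)
  have Ws: "Wf G ?n s" using SS_props s c by auto
  then have L: "length \<gamma>1 = ?n" "length h = ?n" "length p = ?n" "\<forall>j<?n. h!j \<in> carrier G" "Cg \<gamma>1"
    unfolding sp Wf_def by auto
  define t where "t = fold (braid_step G) (invw w) (st0 G \<gamma>1)"
  have W1: "Wf G ?n (st0 G \<gamma>1)" using Wf_st0[of \<gamma>1] L by auto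
  have tS: "t \<in> SS G \<gamma>1" unfolding t_def SS_def using w L by auto
  have Wt: "Wf G ?n t" unfolding t_def using fold_Wf[OF W1] w by auto
  have c1: "cmp G ?n t (h,p) = st0 G \<gamma>"
  proof -
    have "cmp G ?n t (h,p) = fold (braid_step G) (invw w) (cmp G ?n (st0 G \<gamma>1) (h,p))"
      unfolding t_def using fold_cmp[OF W1, of "invw w" h p] w L by auto
    also have "\<dots> = fold (braid_step G) (invw w) s" using cmp_st0 L sp by auto
    also have "\<dots> = st0 G \<gamma>" using fold_inv[OF Wf_st0[OF c] w(1)] w(2) by simp
    finally show ?thesis .
  qed
  obtain \<gamma>t ht pt where tp: "t = (\<gamma>t,ht,pt)" by (cases t)
  have "\<gamma>t = \<gamma>" using arg_cong[OF c1, of fst] tp by (simp add: st0_def)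
  have Lt: "length ht = ?n" "length pt = ?n" "\<forall>j<?n. ht!j \<in> carrier G" using Wt unfolding tp Wf_def by auto
  have c2: "cmp G ?n s (ht,pt) = st0 G \<gamma>1"
  proof -
    have "cmp G ?n s (ht,pt) = fold (braid_step G) w (cmp G ?n (st0 G \<gamma>) (ht,pt))"
      using w fold_cmp[OF Wf_st0[OF c] w(1) Lt(1,3)] by auto
    also have "\<dots> = fold (braid_step G) w t" using cmp_st0[of \<gamma> ?n ht pt] Lt tp \<open>\<gamma>t = \<gamma>\<close> by auto
    also have "\<dots> = st0 G \<gamma>1" unfolding t_def using fold_inv[OF W1, of "invw w"] w by simp
    finally show ?thesis .
  qed
  show ?thesis using tS c1 c2 sp tp by auto
qed

lemma card_le:
  assumes fin: "finite (carrier G)" and s: "s \<in> SS G \<gamma>" and c: "Cg \<gamma>"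
  shows "card (SS G \<gamma>) \<le> card (SS G (fst s))"
proof -
  let ?n = "length \<gamma>"
  obtain t where t: "t \<in> SS G (fst s)" "cmp G ?n t (snd s) = st0 G \<gamma>" using inv_ex[OF s c] by auto
  have c1: "Cg (fst s)" "length (fst s) = ?n" using SS_fst[OF s c] by auto
  have Wt: "Wf G ?n t" using SS_props[OF t(1) c1(1)] c1 by auto
  have Ws: "Wf G ?n s" using SS_props[OF s c] by auto
  have "SS G \<gamma> \<subseteq> (\<lambda>u. cmp G ?n u (snd s)) ` SS G (fst s)"
  proof
    fix u assume "u \<in> SS G \<gamma>"
    then obtain v where v: "valid ?n v" "u = fold (braid_step G) v (st0 G \<gamma>)" unfolding SS_def by auto
    obtain h p where hp: "snd s = (h,p)" by (cases "snd s")
    have "length h = ?n" "\<forall>j<?n. h!j \<in> carrier G" using Ws hp unfolding Wf_def by (cases s; auto)+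
    then have "u = cmp G ?n (fold (braid_step G) v t) (snd s)"
      using v t(2) fold_cmp[OF Wt v(1), of h p] hp by simp
    moreover have "fold (braid_step G) v t \<in> SS G (fst s)" using SS_fold[OF t(1)] v c1 by auto
    ultimately show "u \<in> (\<lambda>u. cmp G ?n u (snd s)) ` SS G (fst s)" by auto
  qed
  then show ?thesis using finite_SS[OF fin c1(1)] 
    using card_image_le card_mono finite_imageI le_trans by metis
qed

lemma card_reach:
  assumes fin: "finite (carrier G)" and s: "s \<in> SS G \<gamma>" and c: "Cg \<gamma>"
  shows "card (SS G (fst s)) = card (SS G \<gamma>)"
proof -
  obtain t where t: "t \<in> SS G (fst s)" "cmp G (length \<gamma>) t (snd s) = st0 G \<gamma>" using inv_ex[OF s c] by auto
  have "fst t = \<gamma>" using arg_cong[OF t(2), of fst] by (simp add: st0_def)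
  have c1: "Cg (fst s)" using SS_fst[OF s c] by auto
  show ?thesis using card_le[OF fin s c] card_le[OF fin t(1) c1] \<open>fst t = \<gamma>\<close> by simp
qed

end

definition Iv :: "('g,'b) monoid_scheme \<Rightarrow> 'g list \<Rightarrow> 'g list \<times> 'g list \<times> nat list \<Rightarrow> 'g list \<times> 'g list \<times> nat list" where
  "Iv G \<gamma> s = (SOME t. t \<in> SS G (fst s) \<and> cmp G (length \<gamma>) t (snd s) = st0 G \<gamma>)"

abbreviation ri :: "('g,'b) monoid_scheme \<Rightarrow> 'g list \<Rightarrow> 'g list" where
  "ri G \<gamma> \<equiv> rev (map (\<lambda>a. inv\<^bsub>G\<^esub> a) \<gamma>)"

context group begin

lemma u_uniq:
  assumes s: "s \<in> SS G \<gamma>" and c: "Cg \<gamma>" and u: "u \<in> SS G (fst s)" and t: "t \<in> SS G (fst s)"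
    and e: "cmp G (length \<gamma>) u (snd s) = st0 G \<gamma>" "cmp G (length \<gamma>) t (snd s) = st0 G \<gamma>"
  shows "u = t"
proof -
  let ?n = "length \<gamma>"
  have c1: "Cg (fst s)" "length (fst s) = ?n" using SS_fst[OF s c] by auto
  have Wu: "Wf G ?n u" using SS_props[OF u c1(1)] c1 by auto
  have Wt: "Wf G ?n t" using SS_props[OF t c1(1)] c1 by auto
  have Ws: "Wf G ?n s" using SS_props[OF s c] by auto
  obtain h p where hp: "snd s = (h,p)" by (cases "snd s")
  have hpp: "length p = ?n" "distinct p" "\<forall>j<?n. h!j \<in> carrier G" using Ws hp unfolding Wf_def by (cases s; auto)+
  have "fst u = fst t" using arg_cong[OF e(1), of fst] arg_cong[OF e(2), of fst] by simp
  then show ?thesis using cmp_cancel[OF Wu Wt _ hpp] e hp by auto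
qed

lemma Iv_props:
  assumes s: "s \<in> SS G \<gamma>" and c: "Cg \<gamma>"
  shows "Iv G \<gamma> s \<in> SS G (fst s) \<and> cmp G (length \<gamma>) (Iv G \<gamma> s) (snd s) = st0 G \<gamma> \<and>
         cmp G (length \<gamma>) s (snd (Iv G \<gamma> s)) = st0 G (fst s)"
proof -
  obtain t where t: "t \<in> SS G (fst s)" "cmp G (length \<gamma>) t (snd s) = st0 G \<gamma>"
     "cmp G (length \<gamma>) s (snd t) = st0 G (fst s)" using inv_ex[OF s c] by auto
  have ex: "Iv G \<gamma> s \<in> SS G (fst s) \<and> cmp G (length \<gamma>) (Iv G \<gamma> s) (snd s) = st0 G \<gamma>"
    unfolding Iv_def by (rule someI[of _ t]) (use t in auto)
  then have "Iv G \<gamma> s = t" using u_uniq[OF s c _ t(1) _ t(2)] by auto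
  then show ?thesis using ex t by auto
qed

lemma fst_Iv: "s \<in> SS G \<gamma> \<Longrightarrow> Cg \<gamma> \<Longrightarrow> fst (Iv G \<gamma> s) = \<gamma>"
proof -
  assume a: "s \<in> SS G \<gamma>" "Cg \<gamma>"
  have "fst (cmp G (length \<gamma>) (Iv G \<gamma> s) (snd s)) = fst (st0 G \<gamma>)" using Iv_props[OF a] by simp
  then show ?thesis by (simp add: st0_def)
qed

lemma Iv_Iv:
  assumes s: "s \<in> SS G \<gamma>" and c: "Cg \<gamma>"
  shows "Iv G (fst s) (Iv G \<gamma> s) = s"
proof -
  let ?t = "Iv G \<gamma> s"
  have P: "?t \<in> SS G (fst s)" "cmp G (length \<gamma>) s (snd ?t) = st0 G (fst s)" using Iv_props[OF s c] by auto
  have c1: "Cg (fst s)" "length (fst s) = length \<gamma>" using SS_fst[OF s c] by auto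
  have ft: "fst ?t = \<gamma>" using fst_Iv[OF s c] .
  have Q: "Iv G (fst s) ?t \<in> SS G \<gamma>" "cmp G (length \<gamma>) (Iv G (fst s) ?t) (snd ?t) = st0 G (fst s)"
    using Iv_props[OF P(1) c1(1)] ft c1 by auto
  show ?thesis using u_uniq[OF P(1) c1(1) _ _ _ ] Q P(2) s ft c1 by auto
qed

lemma fst_Dm[simp]: "fst (Dm G n s) = ri G (fst s)"
  unfolding Dm_def by (auto split: prod.splits)

lemma Dm_SS: assumes c: "Cg \<gamma>" and s: "s \<in> SS G \<gamma>" shows "Dm G (length \<gamma>) s \<in> SS G (ri G \<gamma>)"
proof -
  obtain w where w: "valid (length \<gamma>) w" "s = fold (braid_step G) w (st0 G \<gamma>)" using s unfolding SS_def by auto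
  have "Dm G (length \<gamma>) s = fold (braid_step G) (mw (length \<gamma>) w) (st0 G (ri G \<gamma>))"
    using fold_Dm[OF Wf_st0[OF c] w(1)] w(2) Dm_st0 by simp
  then show ?thesis unfolding SS_def using valid_mw[OF w(1)] by auto
qed

lemma ri_ri: "Cg \<gamma> \<Longrightarrow> ri G (ri G \<gamma>) = \<gamma>"
  by (auto intro!: nth_equalityI simp: rev_nth rev_map[symmetric])

lemma Cg_ri: "Cg \<gamma> \<Longrightarrow> Cg (ri G \<gamma>)"
  by (auto simp: rev_nth)

lemma card_Dm: assumes c: "Cg \<gamma>" shows "card (SS G (ri G \<gamma>)) = card (SS G \<gamma>)"
proof -
  let ?n = "length \<gamma>"
  have "Dm G ?n ` SS G \<gamma> = SS G (ri G \<gamma>)"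
  proof
    show "Dm G ?n ` SS G \<gamma> \<subseteq> SS G (ri G \<gamma>)" using Dm_SS[OF c] by auto
    show "SS G (ri G \<gamma>) \<subseteq> Dm G ?n ` SS G \<gamma>"
    proof
      fix u assume u: "u \<in> SS G (ri G \<gamma>)"
      have "Dm G ?n u \<in> SS G \<gamma>" using Dm_SS[OF Cg_ri[OF c] u] ri_ri[OF c] by simp
      moreover have "Dm G ?n (Dm G ?n u) = u" using Dm_Dm SS_props[OF u Cg_ri[OF c]] by simp
      ultimately show "u \<in> Dm G ?n ` SS G \<gamma>" by (metis imageI)
    qed
  qed
  moreover have "inj_on (Dm G ?n) (SS G \<gamma>)"
    by (rule inj_on_inverseI[of _ "Dm G ?n"]) (use Dm_Dm SS_props c in blast)
  ultimately show ?thesis by (metis card_image)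
qed


lemma core:
  fixes T T' :: "'a list \<times> nat list \<Rightarrow> 'k::field"
  assumes fin: "finite (carrier G)" and c: "Cg \<gamma>" and c': "Cg \<gamma>'" and len: "length \<gamma>' = length \<gamma>"
    and van1: "\<forall>s\<in>SS G \<gamma>. fst s \<noteq> \<gamma>' \<longrightarrow> T (snd s) = 0"
    and van2: "\<forall>s\<in>SS G (ri G \<gamma>'). fst s \<noteq> ri G \<gamma> \<longrightarrow> T' (snd s) = 0"
    and mat: "\<forall>s\<in>SS G \<gamma>. fst s = \<gamma>' \<longrightarrow> T' (snd (Dm G (length \<gamma>) (Iv G \<gamma> s))) = T (snd s)"
  shows "1 / of_nat (card (snd ` SS G \<gamma>)) * (\<Sum>f\<in>snd ` SS G \<gamma>. T f)
       = 1 / of_nat (card (snd ` SS G (ri G \<gamma>'))) * (\<Sum>f\<in>snd ` SS G (ri G \<gamma>'). T' f)"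
proof -
  let ?n = "length \<gamma>"
  let ?d = "ri G \<gamma>'"
  have cd: "Cg ?d" using Cg_ri[OF c'] .
  define E where "E = {s\<in>SS G \<gamma>. fst s = \<gamma>'}"
  define E' where "E' = {s\<in>SS G ?d. fst s = ri G \<gamma>}"
  have s1: "(\<Sum>f\<in>snd ` SS G \<gamma>. T f) = (\<Sum>s\<in>E. T (snd s))"
  proof -
    have "(\<Sum>f\<in>snd ` SS G \<gamma>. T f) = (\<Sum>s\<in>SS G \<gamma>. T (snd s))"
      using sum.reindex[OF inj_snd[OF c], of T] by simp
    also have "\<dots> = (\<Sum>s\<in>E. T (snd s))"
      by (rule sum.mono_neutral_right) (use finite_SS[OF fin c] van1 in \<open>auto simp: E_def\<close>)
    finally show ?thesis .
  qed
  have s2: "(\<Sum>f\<in>snd ` SS G ?d. T' f) = (\<Sum>s\<in>E'. T' (snd s))"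
  proof -
    have "(\<Sum>f\<in>snd ` SS G ?d. T' f) = (\<Sum>s\<in>SS G ?d. T' (snd s))"
      using sum.reindex[OF inj_snd[OF cd], of T'] by simp
    also have "\<dots> = (\<Sum>s\<in>E'. T' (snd s))"
      by (rule sum.mono_neutral_right) (use finite_SS[OF fin cd] van2 in \<open>auto simp: E'_def\<close>)
    finally show ?thesis .
  qed
  let ?P = "\<lambda>s. Dm G ?n (Iv G \<gamma> s)"
  let ?Q = "\<lambda>s. Iv G \<gamma>' (Dm G ?n s)"
  have lenri: "length ?d = ?n" using len by simp
  have PE: "?P s \<in> E'" if s: "s \<in> E" for s
  proof -
    have s': "s \<in> SS G \<gamma>" "fst s = \<gamma>'" using s unfolding E_def by auto
    have "Iv G \<gamma> s \<in> SS G \<gamma>'" using Iv_props[OF s'(1) c] s'(2) by auto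
    then have "?P s \<in> SS G ?d" using Dm_SS[OF c'] len by simp
    moreover have "fst (?P s) = ri G \<gamma>" using fst_Iv[OF s'(1) c] by simp
    ultimately show ?thesis unfolding E'_def by auto
  qed
  have QE: "?Q s \<in> E \<and> Dm G ?n s \<in> SS G \<gamma>' \<and> fst (Dm G ?n s) = \<gamma>" if s: "s \<in> E'" for s
  proof -
    have s': "s \<in> SS G ?d" "fst s = ri G \<gamma>" using s unfolding E'_def by auto
    have D: "Dm G ?n s \<in> SS G \<gamma>'" using Dm_SS[OF cd s'(1)] ri_ri[OF c'] lenri by simp
    have fD: "fst (Dm G ?n s) = \<gamma>" using s'(2) ri_ri[OF c] by simp
    have "?Q s \<in> SS G \<gamma>" using Iv_props[OF D c'] fD by auto
    moreover have "fst (?Q s) = \<gamma>'" using fst_Iv[OF D c'] .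
    ultimately show ?thesis unfolding E_def using D fD by auto
  qed
  have QP: "?Q (?P s) = s" if s: "s \<in> E" for s
  proof -
    have s': "s \<in> SS G \<gamma>" "fst s = \<gamma>'" using s unfolding E_def by auto
    have "Iv G \<gamma> s \<in> SS G \<gamma>'" using Iv_props[OF s'(1) c] s'(2) by auto
    then have "Wf G ?n (Iv G \<gamma> s)" using SS_props[OF _ c'] len by auto
    then have "Dm G ?n (?P s) = Iv G \<gamma> s" using Dm_Dm by simp
    then show ?thesis using Iv_Iv[OF s'(1) c] s'(2) by simp
  qed
  have PQ: "?P (?Q s) = s" if s: "s \<in> E'" for s
  proof -
    have s': "s \<in> SS G ?d" using s unfolding E'_def by auto
    have D: "Dm G ?n s \<in> SS G \<gamma>'" "fst (Dm G ?n s) = \<gamma>" using QE[OF s] by auto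
    have "Iv G \<gamma> (?Q s) = Dm G ?n s" using Iv_Iv[OF D(1) c'] D(2) by simp
    then show ?thesis using Dm_Dm SS_props[OF s' cd] lenri by simp
  qed
  have sE: "(\<Sum>s\<in>E. T (snd s)) = (\<Sum>s\<in>E'. T' (snd s))"
    by (rule sum.reindex_bij_witness[of _ ?Q ?P]) (use QP PE PQ QE mat in \<open>auto simp: E_def\<close>)
  show ?thesis
  proof (cases "E = {}")
    case True
    then have "E' = {}" using QE by blast
    then show ?thesis using s1 s2 True by simp
  next
    case False
    then obtain s where s: "s \<in> SS G \<gamma>" "fst s = \<gamma>'" unfolding E_def by auto
    have "card (SS G \<gamma>') = card (SS G \<gamma>)" using card_reach[OF fin s(1) c] s(2) by simp
    moreover have "card (SS G ?d) = card (SS G \<gamma>')" using card_Dm[OF c'] .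
    ultimately have "card (snd ` SS G \<gamma>) = card (snd ` SS G ?d)"
      using card_image[OF inj_snd[OF c]] card_image[OF inj_snd[OF cd]] by simp
    then show ?thesis using s1 s2 sE by simp
  qed
qed


lemma rev_bij: "bij_betw (\<lambda>k. n - Suc k) {..<n} {..<(n::nat)}"
  by (rule bij_betw_byWitness[where f'="\<lambda>k. n - Suc k"]) auto

lemma inv_of_one: "x \<in> carrier G \<Longrightarrow> y \<in> carrier G \<Longrightarrow> x \<otimes> y = \<one> \<Longrightarrow> inv x = y"
proof -
  assume a: "x \<in> carrier G" "y \<in> carrier G" "x \<otimes> y = \<one>"
  have "y = inv x \<otimes> (x \<otimes> y)" using a(1,2) by simp
  also have "\<dots> = inv x" using a by simp
  finally show ?thesis by simp
qed

lemma vanish: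
  fixes rho :: "'a \<Rightarrow> 'i \<Rightarrow> 'i \<Rightarrow> 'k::field"
  assumes dax: "\<forall>g\<in>carrier G. \<forall>i j. rho g i j \<noteq> 0 \<longrightarrow> deg i = g \<otimes> deg j \<otimes> inv g"
    and dc: "\<forall>i. deg i \<in> carrier G"
    and s: "s \<in> SS G (map deg is)" and lj: "length js = length is" and ne: "fst s \<noteq> map deg js"
  shows "(\<lambda>(h,p). \<Prod>j<length is. rho (h!j) (js!j) (is!(p!j))) (snd s) = 0"
proof -
  let ?n = "length is"
  obtain \<gamma>1 h p where sp: "s = (\<gamma>1,h,p)" by (cases s)
  have c: "Cg (map deg is)" using dc by simp
  have P: "Wf G ?n s" "Fm G (map deg is) s" using SS_props[OF s c] by auto
  have L: "length \<gamma>1 = ?n" "\<forall>j<?n. h!j \<in> carrier G" "\<forall>j<?n. p!j < ?n"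
    and F: "\<forall>j<?n. \<gamma>1!j = h!j \<otimes> deg (is!(p!j)) \<otimes> inv (h!j)"
    using P unfolding sp Wf_def Fm_def by auto
  have "\<exists>j<?n. \<gamma>1!j \<noteq> deg (js!j)"
  proof (rule ccontr)
    assume "\<not> (\<exists>j<?n. \<gamma>1!j \<noteq> deg (js!j))"
    then have "\<gamma>1 = map deg js" using L(1) lj by (auto intro!: nth_equalityI)
    then show False using ne sp by simp
  qed
  then obtain j where j: "j < ?n" "\<gamma>1!j \<noteq> deg (js!j)" by blast
  have "rho (h!j) (js!j) (is!(p!j)) = 0"
  proof (rule ccontr)
    assume "rho (h!j) (js!j) (is!(p!j)) \<noteq> 0"
    then have "deg (js!j) = h!j \<otimes> deg (is!(p!j)) \<otimes> inv (h!j)" using dax L j by blast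
    then show False using F j by simp
  qed
  then show ?thesis using j sp by auto
qed

lemma dual_dax:
  fixes rho :: "'a \<Rightarrow> 'i \<Rightarrow> 'i \<Rightarrow> 'k::field"
  assumes dax: "\<forall>g\<in>carrier G. \<forall>i j. rho g i j \<noteq> 0 \<longrightarrow> deg i = g \<otimes> deg j \<otimes> inv g"
    and dc: "\<forall>i. deg i \<in> carrier G"
  shows "\<forall>g\<in>carrier G. \<forall>i j. dual_rep G rho g i j \<noteq> 0 \<longrightarrow> dual_deg G deg i = g \<otimes> dual_deg G deg j \<otimes> inv g"
proof (intro ballI allI impI)
  fix g i j assume g: "g \<in> carrier G" and "dual_rep G rho g i j \<noteq> 0"
  then have "rho (inv g) j i \<noteq> 0" unfolding dual_rep_def by simp
  then have "deg j = inv g \<otimes> deg i \<otimes> inv (inv g)" using dax inv_closed[OF g] by blast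
  then have e: "deg j = inv g \<otimes> deg i \<otimes> g" using g by simp
  have "g \<otimes> inv (deg j) \<otimes> inv g = g \<otimes> (inv g \<otimes> inv (deg i) \<otimes> g) \<otimes> inv g"
    using e g dc by (simp add: inv_mult_group m_assoc)
  also have "\<dots> = inv (deg i)" using g dc by (simp add: m_assoc)
  finally show "dual_deg G deg i = g \<otimes> dual_deg G deg j \<otimes> inv g" unfolding dual_deg_def by simp
qed

lemma match:
  fixes rho :: "'a \<Rightarrow> 'i \<Rightarrow> 'i \<Rightarrow> 'k::field"
  assumes dc: "\<forall>i. deg i \<in> carrier G"
    and s: "s \<in> SS G (map deg is)" and lk: "length ks = length is"
  shows "(\<lambda>(h,p). \<Prod>j<length is. dual_rep G rho (h!j) (rev is!j) (ks!(p!j))) (snd (Dm G (length is) (Iv G (map deg is) s)))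
       = (\<lambda>(h,p). \<Prod>j<length is. rho (h!j) (rev ks!j) (is!(p!j))) (snd s)"
proof -
  let ?n = "length is"
  let ?\<gamma> = "map deg is"
  have c: "Cg ?\<gamma>" using dc by simp
  obtain \<gamma>1 h p where sp: "s = (\<gamma>1,h,p)" by (cases s)
  obtain \<gamma>2 h2 p2 where tp: "Iv G ?\<gamma> s = (\<gamma>2,h2,p2)" by (cases "Iv G ?\<gamma> s")
  have Ws: "Wf G ?n s" using SS_props[OF s c] by auto
  have IP: "Iv G ?\<gamma> s \<in> SS G (fst s)" "cmp G ?n (Iv G ?\<gamma> s) (snd s) = st0 G ?\<gamma>" using Iv_props[OF s c] by auto
  have c1: "Cg (fst s)" "length (fst s) = ?n" using SS_fst[OF s c] by auto
  have Wt: "Wf G ?n (Iv G ?\<gamma> s)" using SS_props[OF IP(1) c1(1)] c1 by auto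
  have Lt: "length h2 = ?n" "length p2 = ?n" "\<forall>j<?n. h2!j \<in> carrier G" "\<forall>j<?n. p2!j < ?n" "distinct p2"
    using Wt tp unfolding Wf_def by auto
  have Ls: "length h = ?n" "length p = ?n" "\<forall>j<?n. h!j \<in> carrier G"
    using Ws sp unfolding Wf_def by auto
  have eq: "\<forall>j<?n. h2!j \<otimes> h!(p2!j) = \<one> \<and> p!(p2!j) = j"
  proof (intro allI impI)
    fix j assume j: "j < ?n"
    have "cmp G ?n (\<gamma>2,h2,p2) (h,p) = st0 G ?\<gamma>" using IP(2) tp sp by simp
    then have e: "map (\<lambda>j. h2!j \<otimes> h!(p2!j)) [0..<?n] = replicate ?n \<one>" "map (\<lambda>j. p!(p2!j)) [0..<?n] = [0..<?n]"
      unfolding cmp_def st0_def by auto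
    have "map (\<lambda>j. h2!j \<otimes> h!(p2!j)) [0..<?n] ! j = replicate ?n \<one> ! j"
         "map (\<lambda>j. p!(p2!j)) [0..<?n] ! j = [0..<?n] ! j" using e by simp_all
    then show "h2!j \<otimes> h!(p2!j) = \<one> \<and> p!(p2!j) = j" using j by simp
  qed
  have ih: "\<forall>k<?n. inv (h2!k) = h!(p2!k)" using eq Lt Ls inv_of_one by auto
  define F where "F = (\<lambda>m. rho (h!m) (rev ks!m) (is!(p!m)))"
  have "(\<lambda>(h,p). \<Prod>j<?n. dual_rep G rho (h!j) (rev is!j) (ks!(p!j))) (snd (Dm G ?n (Iv G ?\<gamma> s)))
      = (\<Prod>j<?n. rho (inv (rev h2!j)) (ks!(rev (map ((-) (?n - 1)) p2)!j)) (rev is!j))"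
    unfolding tp Dm_def dual_rep_def by simp
  also have "\<dots> = (\<Prod>k<?n. rho (inv (rev h2!(?n - Suc k))) (ks!(rev (map ((-) (?n - 1)) p2)!(?n - Suc k))) (rev is!(?n - Suc k)))"
    using prod.reindex_bij_betw[OF rev_bij, symmetric] by simp
  also have "\<dots> = (\<Prod>k<?n. F (p2!k))"
  proof (rule prod.cong)
    fix k assume k: "k \<in> {..<?n}"
    then have k': "k < ?n" by simp
    have a: "rev h2!(?n - Suc k) = h2!k" using k' Lt by (simp add: rev_nth)
    have b: "rev (map ((-) (?n - 1)) p2)!(?n - Suc k) = ?n - 1 - p2!k" using k' Lt by (simp add: rev_nth)
    have b2: "ks!(?n - 1 - p2!k) = rev ks!(p2!k)" using k' Lt lk by (simp add: rev_nth)
    have d: "rev is!(?n - Suc k) = is!k" using k' by (simp add: rev_nth)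
    show "rho (inv (rev h2!(?n - Suc k))) (ks!(rev (map ((-) (?n - 1)) p2)!(?n - Suc k))) (rev is!(?n - Suc k)) = F (p2!k)"
      unfolding a b b2 d F_def using ih eq k' by simp
  qed simp
  also have "\<dots> = (\<Prod>m<?n. F m)"
  proof -
    have inj: "inj_on (\<lambda>k. p2!k) {..<?n}" using Lt by (auto simp: inj_on_def nth_eq_iff_index_eq)
    have "(\<lambda>k. p2!k) ` {..<?n} = {..<?n}" by (rule endo_inj_surj) (use Lt inj in auto)
    then have "bij_betw (\<lambda>k. p2!k) {..<?n} {..<?n}" using inj by (simp add: bij_betw_def)
    then show ?thesis by (rule prod.reindex_bij_betw)
  qed
  finally show ?thesis unfolding sp F_def by simp
qed

end

context group begin
lemma K_eq:
  fixes deg :: "'i::finite \<Rightarrow> 'a" and rho :: "'a \<Rightarrow> 'i \<Rightarrow> 'i \<Rightarrow> 'k::field"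
  assumes fin: "finite (carrier G)" and gm: "graded_module G deg rho"
    and lb: "length b = n" and lc: "length c = n"
  shows "1 / of_nat (card (braid_transf G (map deg b))) *
           (\<Sum>(h,p)\<in>braid_transf G (map deg b). \<Prod>j<n. rho (h!j) (rev c!j) (b!(p!j)))
       = 1 / of_nat (card (braid_transf G (map (dual_deg G deg) c))) *
           (\<Sum>(h,p)\<in>braid_transf G (map (dual_deg G deg) c). \<Prod>j<n. dual_rep G rho (h!j) (rev b!j) (c!(p!j)))"
proof -
  have dc: "\<forall>i. deg i \<in> carrier G" and dax: "\<forall>g\<in>carrier G. \<forall>i j. rho g i j \<noteq> 0 \<longrightarrow> deg i = g \<otimes> deg j \<otimes> inv g"
    using gm unfolding graded_module_def by auto
  have dc': "\<forall>i. dual_deg G deg i \<in> carrier G" using dc unfolding dual_deg_def by simp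
  note dax' = dual_dax[OF dax dc]
  let ?\<gamma> = "map deg b" and ?\<gamma>' = "map deg (rev c)"
  have r1: "ri G ?\<gamma>' = map (dual_deg G deg) c" by (simp add: rev_map dual_deg_def)
  have r2: "ri G ?\<gamma> = map (dual_deg G deg) (rev b)" by (simp add: rev_map dual_deg_def)
  define T where "T = (\<lambda>(h,p). \<Prod>j<length b. rho (h!j) (rev c!j) (b!(p!j)))"
  define T' where "T' = (\<lambda>(h,p). \<Prod>j<length b. dual_rep G rho (h!j) (rev b!j) (c!(p!j)))"
  have C: "1 / of_nat (card (snd ` SS G ?\<gamma>)) * (\<Sum>f\<in>snd ` SS G ?\<gamma>. T f)
       = 1 / of_nat (card (snd ` SS G (ri G ?\<gamma>'))) * (\<Sum>f\<in>snd ` SS G (ri G ?\<gamma>'). T' f)"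
  proof (rule core[OF fin])
    show "Cg ?\<gamma>" "Cg ?\<gamma>'" using dc by auto
    show "length ?\<gamma>' = length ?\<gamma>" using lb lc by simp
    show "\<forall>s\<in>SS G ?\<gamma>. fst s \<noteq> ?\<gamma>' \<longrightarrow> T (snd s) = 0"
      unfolding T_def using vanish[OF dax dc, of _ b "rev c"] lb lc by auto
    show "\<forall>s\<in>SS G (ri G ?\<gamma>'). fst s \<noteq> ri G ?\<gamma> \<longrightarrow> T' (snd s) = 0"
      unfolding T'_def r1 r2 using vanish[OF dax' dc', of _ c "rev b"] lb lc by auto
    show "\<forall>s\<in>SS G ?\<gamma>. fst s = ?\<gamma>' \<longrightarrow> T' (snd (Dm G (length ?\<gamma>) (Iv G ?\<gamma> s))) = T (snd s)"
      unfolding T_def T'_def using match[OF dc, of _ b c] lb lc by auto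
  qed
  show ?thesis using C unfolding braid_transf_SS r1 T_def T'_def lb by simp
qed

end

lemma finite_tuples: "finite (tuples n :: 'i::finite list set)"
proof -
  have "tuples n \<subseteq> {xs::'i list. set xs \<subseteq> UNIV \<and> length xs = n}" unfolding tuples_def by auto
  then show ?thesis using finite_lists_length_eq[OF finite_UNIV] finite_subset by blast
qed

lemma ind_eq:
  assumes "length js = n" "length is = n"
  shows "(\<Prod>k<n. if js!(n - 1 - k) = is!k then 1 else 0) = (if js = rev is then (1::'k::field) else 0)"
proof (cases "js = rev is")
  case True
  then show ?thesis using assms by (auto intro!: prod.neutral simp: rev_nth)
next
  case False
  have "\<exists>k<n. js!(n - 1 - k) \<noteq> is!k"
  proof (rule ccontr)
    assume "\<not> (\<exists>k<n. js!(n - 1 - k) \<noteq> is!k)"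
    then have a: "\<forall>k<n. js!(n - 1 - k) = is!k" by blast
    have "js = rev is"
    proof (rule nth_equalityI)
      show "length js = length (rev is)" using assms by simp
      fix j assume j: "j < length js"
      have "js!(n - 1 - (n - Suc j)) = is!(n - Suc j)" using a[rule_format, of "n - Suc j"] j assms by auto
      moreover have "n - 1 - (n - Suc j) = j" using j assms by auto
      ultimately show "js!j = rev is!j" using j assms by (simp add: rev_nth)
    qed
    then show False using False by simp
  qed
  then show ?thesis using False by auto
qed

lemma pairing_eq:
  "pairing n X T = (\<Sum>is\<in>tuples n. X (rev is) * T (is::'i::finite list))"
proof -
  have "pairing n X T = (\<Sum>js\<in>tuples n. \<Sum>is\<in>tuples n. X js * T is * (if js = rev is then 1 else 0))"
    unfolding pairing_def
  proof (intro sum.cong refl)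
    fix js "is" :: "'i list" assume a: "js \<in> tuples n" "is \<in> tuples n"
    then have l: "length js = n" "length is = n" by (auto simp: tuples_def)
    show "X js * T is * (\<Prod>k<n. if js!(n - 1 - k) = is!k then 1 else 0) = X js * T is * (if js = rev is then 1 else 0)"
      unfolding ind_eq[OF l] by (rule refl)
  qed
  also have "\<dots> = (\<Sum>is\<in>tuples n. \<Sum>js\<in>tuples n. X js * T is * (if js = rev is then 1 else 0))"
    by (rule sum.swap)
  also have "\<dots> = (\<Sum>is\<in>tuples n. X (rev is) * T is)"
  proof (intro sum.cong refl)
    fix "is" :: "'i list" assume "is \<in> tuples n"
    then have r: "rev is \<in> tuples n" by (simp add: tuples_def)
    have "(\<Sum>js\<in>tuples n. X js * T is * (if js = rev is then 1 else 0))
       = (\<Sum>js\<in>tuples n. if js = rev is then X (rev is) * T is else 0)"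
      by (intro sum.cong refl) auto
    also have "\<dots> = X (rev is) * T is"
      using sum.delta[OF finite_tuples[of n], of "rev is" "\<lambda>_. X (rev is) * T is"] r by simp
    finally show "(\<Sum>js\<in>tuples n. X js * T is * (if js = rev is then 1 else 0)) = X (rev is) * T is" .
  qed
  finally show ?thesis .
qed

theorem corollary2p39:
  fixes G :: "('g, 'b) monoid_scheme"
    and deg :: "'i::finite \<Rightarrow> 'g"
    and rho :: "'g \<Rightarrow> 'i \<Rightarrow> 'i \<Rightarrow> 'k::field"
    and n :: nat
    and x :: "'i list \<Rightarrow> 'k"
    and v :: "'i list \<Rightarrow> 'k"
  assumes "group G"
    and "finite (carrier G)"
    and "graded_module G deg rho"
    and "\<forall>js. length js \<noteq> n \<longrightarrow> x js = 0"
    and "\<forall>is. length is \<noteq> n \<longrightarrow> v is = 0"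
  shows "pairing n (braidization G (dual_deg G deg) (dual_rep G rho) n x) v
           = pairing n x (braidization G deg rho n v)"
proof -
  define K where "K = (\<lambda>b c. 1 / of_nat (card (braid_transf G (map deg b))) *
           (\<Sum>(h,p)\<in>braid_transf G (map deg b). \<Prod>j<n. rho (h!j) (c!j) (b!(p!j))))"
  define K' where "K' = (\<lambda>c b. 1 / of_nat (card (braid_transf G (map (dual_deg G deg) c))) *
           (\<Sum>(h,p)\<in>braid_transf G (map (dual_deg G deg) c). \<Prod>j<n. dual_rep G rho (h!j) (b!j) (c!(p!j))))"
  have KK: "K b (rev c) = K' c (rev b)" if "b \<in> tuples n" "c \<in> tuples n" for b c
    using group.K_eq[OF assms(1,2,3), of b n c] that unfolding K_def K'_def tuples_def by simp
  have L: "pairing n (braidization G (dual_deg G deg) (dual_rep G rho) n x) v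
      = (\<Sum>b\<in>tuples n. (\<Sum>c\<in>tuples n. x c * K' c (rev b)) * v b)"
    unfolding pairing_eq
  proof (intro sum.cong refl)
    fix b :: "'i list" assume "b \<in> tuples n"
    then have "length (rev b) = n" by (simp add: tuples_def)
    then show "braidization G (dual_deg G deg) (dual_rep G rho) n x (rev b) * v b =
         (\<Sum>c\<in>tuples n. x c * K' c (rev b)) * v b"
      unfolding braidization_def K'_def by (simp add: mult.assoc)
  qed
  have R: "pairing n x (braidization G deg rho n v)
      = (\<Sum>c\<in>tuples n. x c * (\<Sum>b\<in>tuples n. v b * K b (rev c)))"
  proof -
    have "pairing n x (braidization G deg rho n v) = (\<Sum>a\<in>tuples n. x (rev a) * (\<Sum>b\<in>tuples n. v b * K b a))"
      unfolding pairing_eq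
    proof (intro sum.cong refl)
      fix a :: "'i list" assume "a \<in> tuples n"
      then have "length a = n" by (simp add: tuples_def)
      then show "x (rev a) * braidization G deg rho n v a = x (rev a) * (\<Sum>b\<in>tuples n. v b * K b a)"
        unfolding braidization_def K_def by (simp add: mult.assoc)
    qed
    also have "\<dots> = (\<Sum>c\<in>tuples n. x c * (\<Sum>b\<in>tuples n. v b * K b (rev c)))"
      by (rule sum.reindex_bij_witness[of _ rev rev]) (auto simp: tuples_def)
    finally show ?thesis .
  qed
  have "(\<Sum>b\<in>tuples n. (\<Sum>c\<in>tuples n. x c * K' c (rev b)) * v b)
      = (\<Sum>b\<in>tuples n. \<Sum>c\<in>tuples n. x c * v b * K b (rev c))"
  proof (intro sum.cong refl)
    fix b :: "'i list" assume b: "b \<in> tuples n"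
    have "(\<Sum>c\<in>tuples n. x c * K' c (rev b)) * v b = (\<Sum>c\<in>tuples n. x c * K' c (rev b) * v b)"
      by (simp add: sum_distrib_right)
    also have "\<dots> = (\<Sum>c\<in>tuples n. x c * v b * K b (rev c))"
      by (intro sum.cong refl) (simp add: KK[OF b] mult_ac)
    finally show "(\<Sum>c\<in>tuples n. x c * K' c (rev b)) * v b = (\<Sum>c\<in>tuples n. x c * v b * K b (rev c))" .
  qed
  also have "\<dots> = (\<Sum>c\<in>tuples n. \<Sum>b\<in>tuples n. x c * v b * K b (rev c))" by (rule sum.swap)
  also have "\<dots> = (\<Sum>c\<in>tuples n. x c * (\<Sum>b\<in>tuples n. v b * K b (rev c)))"
    by (intro sum.cong refl) (simp add: sum_distrib_left mult_ac)
  finally show ?thesis using L R by simp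
qed


end
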